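(* For a positive integer $n$, let $f(n)$ be the maximum value of $\operatorname{Re}\big(\sum_{\xi \in S} \xi\big)$ over all subsets $S$ of the set of $n$-th roots of unity. Then $f(n) \le n/3$ for all $n \ge 3$, and $\lim_{n \to \infty} \frac{f(n)}{n} = \frac{1}{\pi}$. *)

theory Defs
  imports "HOL-Analysis.Analysis"
begin

definition roots_of_unity :: "nat \<Rightarrow> complex set" where
  "roots_of_unity n = {z. z ^ n = 1}"

definition max_root_sum :: "nat \<Rightarrow> real" where
  "max_root_sum n = Max {Re (\<Sum>\<xi>\<in>S. \<xi>) | S. S \<subseteq> roots_of_unity n}"

end

theory Submission
  imports Defs "HOL-Real_Asymp.Real_Asymp"
begin

lemma sin_lower: fixes x :: real assumes "x \<ge> 0" shows "x - x^3/6 - x^5/120 \<le> sin x"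
proof -
  have "\<bar>sin x - (\<Sum>m<5. sin_coeff m * x ^ m)\<bar> \<le> inverse (fact 5) * \<bar>x\<bar> ^ 5"
    by (rule Maclaurin_sin_bound)
  moreover have "(\<Sum>m<5. sin_coeff m * x ^ m) = x - x^3/6"
    by (simp add: lessThan_nat_numeral sin_coeff_def fact_numeral)
  ultimately show ?thesis using assms by (simp add: fact_numeral abs_if split: if_splits)
qed

lemma dirichlet: fixes x :: real
  shows "sin (x/2) * (1 + 2 * (\<Sum>k=1..M. cos (real k * x))) = sin ((2 * real M + 1) * x / 2)"
proof (induction M)
  case 0 then show ?case by simp
next
  case (Suc M)
  have "sin ((2 * real (Suc M) + 1) * x / 2) - sin ((2 * real M + 1) * x / 2)
      = 2 * sin (x/2) * cos (real (Suc M) * x)"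
    by (simp add: sin_diff_sin algebra_simps add_divide_distrib)
  then show ?case using Suc by (simp add: algebra_simps)
qed

lemma maxsum: assumes "finite R"
  shows "Max {Re (\<Sum>\<xi>\<in>S. \<xi>) | S. S \<subseteq> R} = (\<Sum>z\<in>R. max 0 (Re z))"
proof (rule Max_eqI)
  have "{Re (\<Sum>\<xi>\<in>S. \<xi>) | S. S \<subseteq> R} = (\<lambda>S. Re (\<Sum>\<xi>\<in>S. \<xi>)) ` Pow R" by auto
  then show "finite {Re (\<Sum>\<xi>\<in>S. \<xi>) | S. S \<subseteq> R}" using assms by simp
next
  fix y assume "y \<in> {Re (\<Sum>\<xi>\<in>S. \<xi>) | S. S \<subseteq> R}"
  then obtain S where S: "S \<subseteq> R" "y = Re (\<Sum>\<xi>\<in>S. \<xi>)" by auto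
  have "y = (\<Sum>z\<in>S. Re z)" using S by (simp add: Re_sum)
  also have "\<dots> \<le> (\<Sum>z\<in>S. max 0 (Re z))" by (intro sum_mono) auto
  also have "\<dots> \<le> (\<Sum>z\<in>R. max 0 (Re z))" using S assms by (intro sum_mono2) auto
  finally show "y \<le> (\<Sum>z\<in>R. max 0 (Re z))" .
next
  have "(\<Sum>z\<in>R. max 0 (Re z)) = (\<Sum>z\<in>R. if Re z > 0 then Re z else 0)"
    by (intro sum.cong) auto
  also have "\<dots> = (\<Sum>z\<in>{z\<in>R. Re z > 0}. Re z)" using assms by (simp add: sum.inter_filter)
  also have "\<dots> = Re (\<Sum>\<xi>\<in>{z\<in>R. Re z > 0}. \<xi>)" by (simp add: Re_sum)
  finally show "(\<Sum>z\<in>R. max 0 (Re z)) \<in> {Re (\<Sum>\<xi>\<in>S. \<xi>) | S. S \<subseteq> R}" by blast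
qed

lemma f_eq: assumes "n > 0"
  shows "max_root_sum n = (\<Sum>k<n. max 0 (cos (2 * pi * real k / real n)))"
proof -
  have b: "bij_betw (\<lambda>k. cis (2 * pi * real k / real n)) {..<n} (roots_of_unity n)"
    using Complex.bij_betw_roots_unity[OF assms] by (simp add: roots_of_unity_def)
  have fin: "finite (roots_of_unity n)" using bij_betw_finite b by blast
  have "max_root_sum n = (\<Sum>z\<in>roots_of_unity n. max 0 (Re z))"
    unfolding max_root_sum_def using maxsum[OF fin] .
  also have "\<dots> = (\<Sum>k<n. max 0 (Re (cis (2 * pi * real k / real n))))"
    by (rule sum.reindex_bij_betw[OF b, symmetric])
  finally show ?thesis by simp
qed


lemma pointwise:
  fixes n k :: nat
  assumes "k < n" and M: "M = (n - 1) div 4"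
  shows "max 0 (cos (2 * pi * real k / real n)) =
     (if k \<le> M then cos (2 * pi * real k / real n) else 0) +
     (if n - M \<le> k then cos (2 * pi * real k / real n) else 0)"
proof -
  have n0: "real n > 0" using assms by simp
  have M1: "4 * M \<le> n - 1" "n \<le> 4 * M + 4" using M by auto
  have pos: "cos (2 * pi * real j / real n) > 0" if "4 * j < n" for j
  proof -
    have "real (4 * j) < real n" using that by linarith
    hence "2 * pi * real j / real n < pi / 2" using n0 pi_gt_zero
      by (simp add: field_simps)
    moreover have "2 * pi * real j / real n \<ge> 0" using n0 by simp
    moreover have "-(pi/2) < 0" using pi_gt_zero by linarith
    ultimately show ?thesis by (intro cos_gt_zero_pi) linarith+
  qed
  have sym: "cos (2 * pi * real k / real n) = cos (2 * pi * real (n - k) / real n)"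
  proof -
    have "2 * pi * real (n - k) / real n = 2 * pi - 2 * pi * real k / real n"
      using assms n0 by (simp add: of_nat_diff field_simps)
    then show ?thesis by (simp add: cos_diff)
  qed
  consider "k \<le> M" | "n - M \<le> k" | "M < k" "k < n - M" by linarith
  then show ?thesis
  proof cases
    case 1
    then have "4 * k < n" using M1 assms by arith
    then show ?thesis using pos[of k] 1 M1 by auto
  next
    case 2
    then have "4 * (n - k) < n" using M1 assms by linarith
    moreover have "\<not> k \<le> M" using 2 M1 assms by arith
    ultimately show ?thesis using pos[of "n-k"] sym 2 by auto
  next
    case 3
    have a: "real n \<le> 4 * real k" using 3 M1 by linarith
    have b: "4 * real k \<le> 3 * real n" using 3 M1 assms by linarith
    define y where "y = 2 * pi * real k / real n"
    have "pi / 2 \<le> y" using a n0 pi_gt_zero unfolding y_def by (simp add: field_simps)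
    moreover have "y \<le> 3 * pi / 2" using b n0 pi_gt_zero unfolding y_def by (simp add: field_simps)
    ultimately have "0 \<le> sin (y - pi/2)" by (intro sin_ge_zero) auto
    hence "cos y \<le> 0" by (simp add: sin_diff)
    then show ?thesis using 3 unfolding y_def by auto
  qed
qed

lemma closed:
  fixes n :: nat
  assumes "n > 0" and M: "M = (n - 1) div 4"
  shows "(\<Sum>k<n. max 0 (cos (2 * pi * real k / real n))) =
     1 + 2 * (\<Sum>k=1..M. cos (real k * (2 * pi / real n)))"
proof -
  let ?c = "\<lambda>k::nat. cos (2 * pi * real k / real n)"
  have M1: "4 * M \<le> n - 1" using M by auto
  have "(\<Sum>k<n. max 0 (?c k)) = (\<Sum>k<n. (if k \<le> M then ?c k else 0) + (if n - M \<le> k then ?c k else 0))"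
    using pointwise[OF _ M] by (intro sum.cong) auto
  also have "\<dots> = (\<Sum>k<n. (if k \<le> M then ?c k else 0)) + (\<Sum>k<n. (if n - M \<le> k then ?c k else 0))"
    by (simp add: sum.distrib)
  also have "(\<Sum>k<n. (if k \<le> M then ?c k else 0)) = (\<Sum>k\<in>{k\<in>{..<n}. k \<le> M}. ?c k)"
    by (rule sum.inter_filter[symmetric]) simp
  also have "{k\<in>{..<n}. k \<le> M} = {0..M}" using M1 assms by auto
  also have "(\<Sum>k<n. (if n - M \<le> k then ?c k else 0)) = (\<Sum>k\<in>{k\<in>{..<n}. n - M \<le> k}. ?c k)"
    by (rule sum.inter_filter[symmetric]) simp
  also have "{k\<in>{..<n}. n - M \<le> k} = (\<lambda>j. n - j) ` {1..M}"
  proof (rule set_eqI, rule iffI)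
    fix k assume "k \<in> {k\<in>{..<n}. n - M \<le> k}"
    then have "n - k \<in> {1..M}" "k = n - (n - k)" by auto
    then show "k \<in> (\<lambda>j. n - j) ` {1..M}" by blast
  next
    fix k assume "k \<in> (\<lambda>j. n - j) ` {1..M}"
    then show "k \<in> {k\<in>{..<n}. n - M \<le> k}" using M1 assms by auto
  qed
  also have "(\<Sum>k\<in>(\<lambda>j. n - j) ` {1..M}. ?c k) = (\<Sum>j\<in>{1..M}. ?c (n - j))"
    using M1 assms by (subst sum.reindex) (auto simp: inj_on_def)
  also have "\<dots> = (\<Sum>j\<in>{1..M}. ?c j)"
  proof (intro sum.cong refl)
    fix j assume j: "j \<in> {1..M}"
    have jn: "j \<le> n" using j M1 by auto
    have "2 * pi * real (n - j) / real n = 2 * pi - 2 * pi * real j / real n"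
      using jn assms by (simp add: of_nat_diff field_simps)
    then show "?c (n - j) = ?c j" by (simp add: cos_diff)
  qed
  also have "(\<Sum>k\<in>{0..M}. ?c k) = 1 + (\<Sum>k\<in>{1..M}. ?c k)"
    by (simp add: sum.atLeast_Suc_atMost)
  finally show ?thesis by (simp add: algebra_simps)
qed


lemma lim1: "(\<lambda>n::nat. cos(pi/real n)/(real n * sin(pi/real n))) \<longlonglongrightarrow> 1/pi"
proof -
  have "(\<lambda>n::nat. cos(pi/real n)/(real n * sin(pi/real n))) \<longlonglongrightarrow> inverse pi"
    by real_asymp
  then show ?thesis by (simp add: inverse_eq_divide)
qed

lemma lim2: "(\<lambda>n::nat. 1/(real n * sin(pi/real n))) \<longlonglongrightarrow> 1/pi"
proof -
  have "(\<lambda>n::nat. 1/(real n * sin(pi/real n))) \<longlonglongrightarrow> inverse pi"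
    by real_asymp
  then show ?thesis by (simp add: inverse_eq_divide)
qed

lemma fsin:
  fixes n :: nat
  assumes "n > 0"
  shows "sin (pi / real n) * max_root_sum n = sin ((2 * real ((n - 1) div 4) + 1) * pi / real n)"
proof -
  have "max_root_sum n = 1 + 2 * (\<Sum>k=1..(n - 1) div 4. cos (real k * (2 * pi / real n)))"
    using f_eq[OF assms] closed[OF assms refl] by simp
  moreover have "sin ((2 * pi / real n)/2) * (1 + 2 * (\<Sum>k=1..(n - 1) div 4. cos (real k * (2 * pi / real n))))
     = sin ((2 * real ((n - 1) div 4) + 1) * (2 * pi / real n) / 2)"
    by (rule dirichlet)
  ultimately show ?thesis by simp
qed

lemma sinpos: fixes n :: nat assumes "n \<ge> 2" shows "sin (pi / real n) > 0"
proof -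
  have "pi / real n < pi" using assms pi_gt_zero by (simp add: field_simps)
  moreover have "0 < pi / real n" using assms by simp
  ultimately show ?thesis by (intro sin_gt_zero) auto
qed

lemma sin_big: fixes n :: nat assumes "n \<ge> 7" shows "3 / real n \<le> sin (pi / real n)"
proof -
  define x where "x = pi / real n"
  have pi1: "3.1415 \<le> pi" "pi \<le> 3.1416" using pi_approx by auto
  have x0: "0 \<le> x" unfolding x_def by simp
  have "x \<le> pi / 7" unfolding x_def using assms by (intro divide_left_mono) auto
  moreover have "pi / 7 \<le> 0.45" using pi1 by simp
  ultimately have x1: "x \<le> 0.45" by linarith
  have "x^2 \<le> 0.45^2" using power_mono[OF x1 x0, of 2] .
  moreover have "(0.45::real)^2 = 0.2025" by (simp add: power2_eq_square)
  ultimately have x2: "x^2 \<le> 0.2025" by simp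
  have "(x^2)^2 \<le> 0.2025^2" using power_mono[OF x2, of 2] by simp
  moreover have "(0.2025::real)^2 \<le> 0.05" by (simp add: power2_eq_square)
  moreover have "(x^2)^2 = x^4" by (simp add: power_mult[symmetric])
  ultimately have x4: "x^4 \<le> 0.05" by simp
  have "1 - x^2/6 - x^4/120 \<ge> 0.965" using x2 x4 by (simp; linarith)
  hence "x * 0.965 \<le> x * (1 - x^2/6 - x^4/120)" using x0 by (intro mult_left_mono) auto
  also have "\<dots> = x - x^3/6 - x^5/120" by (simp add: algebra_simps power_numeral_reduce)
  also have "\<dots> \<le> sin x" using sin_lower x0 by simp
  finally have s: "x * 0.965 \<le> sin x" .
  have "3 / real n \<le> x * 0.965" unfolding x_def using pi1 assms by (simp add: field_simps)
  with s show ?thesis unfolding x_def by simp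
qed

lemma cos_pi5: "4 * cos (pi / 5)^2 - 1 \<le> 5 / 3"
proof -
  define c where "c = cos (pi / 5)"
  have "cos (3 * (pi/5)) = - cos (2 * (pi/5))"
  proof -
    have "cos (3 * (pi/5)) = cos (pi - 2 * (pi/5))" by (rule arg_cong[where f=cos]) simp
    also have "\<dots> = - cos (2 * (pi/5))" by (rule cos_pi_minus)
    finally show ?thesis .
  qed
  moreover have "cos (3 * (pi/5)) = 4 * c^3 - 3 * c" unfolding c_def by (rule cos_treble_cos)
  moreover have "cos (2 * (pi/5)) = 2 * c^2 - 1" unfolding c_def by (rule cos_double_cos)
  ultimately have e: "4 * c^3 - 3 * c = - (2 * c^2 - 1)" by simp
  have cpos: "c > 0" unfolding c_def by (rule cos_gt_zero_pi) (use pi_gt_zero in linarith)+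
  have "(c + 1) * (4 * c^2 - 2 * c - 1) = 0" using e by (simp add: algebra_simps power_numeral_reduce)
  hence q: "4 * c^2 = 2 * c + 1" using cpos by simp
  have "c \<le> 5/6"
  proof (rule ccontr)
    assume "\<not> c \<le> 5 / 6"
    hence c56: "c > 5/6" by simp
    hence "c * c > (5/6) * c" using cpos by (intro mult_strict_right_mono) auto
    with q c56 show False unfolding power2_eq_square by linarith
  qed
  with q show ?thesis unfolding c_def by linarith
qed

lemma part1: fixes n :: nat assumes "n \<ge> 3" shows "max_root_sum n \<le> real n / 3"
proof -
  define M where "M = (n - 1) div 4"
  have sp: "sin (pi / real n) > 0" using sinpos assms by simp
  have key: "sin ((2 * real M + 1) * pi / real n) \<le> real n / 3 * sin (pi / real n)"
  proof -
    consider "n = 3" | "n = 4" | "n = 5" | "n = 6" | "n \<ge> 7" using assms by linarith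
    then show ?thesis
    proof cases
      case 1 then show ?thesis unfolding M_def by simp
    next
      case 2 then show ?thesis using sp unfolding M_def by simp
    next
      case 3
      have "sin (3 * (pi / 5)) = sin (2 * (pi/5) + pi/5)" by (rule arg_cong[where f=sin]) simp
      also have "\<dots> = sin (pi/5) * (4 * cos (pi/5)^2 - 1)"
        by (simp only: sin_add sin_double cos_double_cos) (simp add: algebra_simps power2_eq_square)
      also have "\<dots> \<le> sin (pi/5) * (5/3)"
      proof (intro mult_left_mono)
        show "4 * cos (pi/5)^2 - 1 \<le> 5/3" by (rule cos_pi5)
        show "0 \<le> sin (pi/5)" using sp 3 by simp
      qed
      finally show ?thesis using 3 unfolding M_def by (simp add: mult.commute)
    next
      case 4
      then show ?thesis unfolding M_def by (simp add: sin_30)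
    next
      case 5
      have "sin ((2 * real M + 1) * pi / real n) \<le> 1" by simp
      also have "1 \<le> real n / 3 * sin (pi / real n)"
        using sin_big[OF 5] 5 by (simp add: field_simps)
      finally show ?thesis .
    qed
  qed
  have "sin (pi / real n) * max_root_sum n \<le> sin (pi / real n) * (real n / 3)"
    using fsin[of n] assms key unfolding M_def by (simp add: mult.commute)
  then show ?thesis using sp by simp
qed


lemma S_lower: fixes n :: nat assumes "n \<ge> 2"
  shows "cos (pi / real n) \<le> sin ((2 * real ((n - 1) div 4) + 1) * pi / real n)"
proof -
  define M where "M = (n - 1) div 4"
  have M1: "real n - 4 \<le> 4 * real M" "4 * real M \<le> real n - 1" using assms unfolding M_def by linarith+
  define d where "d = (2 * real M + 1) * pi / real n - pi / 2"
  have n0: "real n > 0" using assms by simp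
  have d_eq: "d = pi * (4 * real M + 2 - real n) / (2 * real n)"
    unfolding d_def using n0 by (simp add: field_simps)
  have "\<bar>4 * real M + 2 - real n\<bar> \<le> 2" using M1 by linarith
  hence "pi * \<bar>4 * real M + 2 - real n\<bar> \<le> pi * 2" using pi_gt_zero by (intro mult_left_mono) auto
  hence "pi * \<bar>4 * real M + 2 - real n\<bar> / (2 * real n) \<le> pi * 2 / (2 * real n)"
    using n0 by (intro divide_right_mono) auto
  moreover have "\<bar>d\<bar> = pi * \<bar>4 * real M + 2 - real n\<bar> / (2 * real n)"
    unfolding d_eq using n0 pi_gt_zero by (simp add: abs_mult abs_divide)
  ultimately have "\<bar>d\<bar> \<le> pi * 2 / (2 * real n)" by simp
  hence dle: "\<bar>d\<bar> \<le> pi / real n" by simp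
  have "pi / real n \<le> pi" using assms pi_gt_zero by (simp add: field_simps)
  hence "cos (pi / real n) \<le> cos \<bar>d\<bar>" using dle by (intro cos_monotone_0_pi_le) auto
  also have "\<dots> = sin (d + pi / 2)" by (simp add: sin_add)
  also have "d + pi / 2 = (2 * real M + 1) * pi / real n" unfolding d_def by simp
  finally show ?thesis unfolding M_def .
qed

lemma part2: "(\<lambda>n. max_root_sum n / real n) \<longlonglongrightarrow> 1 / pi"
proof (rule tendsto_sandwich[OF _ _ lim1 lim2])
  show "\<forall>\<^sub>F n in sequentially. cos (pi / real n) / (real n * sin (pi / real n)) \<le> max_root_sum n / real n"
  proof (rule eventually_sequentiallyI[of 2])
    fix n :: nat assume n: "n \<ge> 2"
    have sp: "sin (pi / real n) > 0" using sinpos n by simp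
    have "max_root_sum n = sin ((2 * real ((n - 1) div 4) + 1) * pi / real n) / sin (pi / real n)"
      using fsin[of n] n sp by (simp add: field_simps)
    hence "max_root_sum n \<ge> cos (pi / real n) / sin (pi / real n)"
      using S_lower[OF n] sp by (simp add: divide_right_mono)
    hence "(cos (pi / real n) / sin (pi / real n)) / real n \<le> max_root_sum n / real n"
      by (intro divide_right_mono) auto
    then show "cos (pi / real n) / (real n * sin (pi / real n)) \<le> max_root_sum n / real n"
      by (simp add: mult.commute)
  qed
  show "\<forall>\<^sub>F n in sequentially. max_root_sum n / real n \<le> 1 / (real n * sin (pi / real n))"
  proof (rule eventually_sequentiallyI[of 2])
    fix n :: nat assume n: "n \<ge> 2"
    have sp: "sin (pi / real n) > 0" using sinpos n by simp
    have "max_root_sum n = sin ((2 * real ((n - 1) div 4) + 1) * pi / real n) / sin (pi / real n)"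
      using fsin[of n] n sp by (simp add: field_simps)
    hence "max_root_sum n \<le> 1 / sin (pi / real n)"
      using sp by (simp add: divide_right_mono)
    hence "max_root_sum n / real n \<le> (1 / sin (pi / real n)) / real n"
      by (intro divide_right_mono) auto
    then show "max_root_sum n / real n \<le> 1 / (real n * sin (pi / real n))"
      by (simp add: mult.commute)
  qed
qed

theorem lemma3p8:
  shows "(\<forall>n::nat. n \<ge> 3 \<longrightarrow> max_root_sum n \<le> real n / 3)
         \<and> ((\<lambda>n. max_root_sum n / real n) \<longlonglongrightarrow> 1 / pi)"
  using part1 part2 by blast

end
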